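(* Let $\lambda_1,\lambda_2,\mu>0$, $p_{12},p_{21}\in[0,1]$, $r_1,r_2,h_1,h_2\ge0$, $c_1,c_2\in\mathbb{R}$. For nonnegative integers $Q_1,Q_2$ define $$\pi^{(2)}(Q_1,Q_2)=\mu\Big[(r_1-c_1)Q_1+(r_2-c_2)Q_2-(r_1+h_1)E_{Q_1,Q_2}[m_1]-(r_2+h_2)E_{Q_1,Q_2}[m_2]\Big],$$ where $(m_1,m_2)$ has the stationary distribution of the inventory CTMC with random replenishment and order levels $(Q_1,Q_2)$. Then $\pi^{(2)}$ is submodular: for all integers $Q_1,Q_2\ge0$, $$\pi^{(2)}(Q_1+1,Q_2+1)-\pi^{(2)}(Q_1+1,Q_2)-\pi^{(2)}(Q_1,Q_2+1)+\pi^{(2)}(Q_1,Q_2)\le0.$$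
   Context: Inventory CTMC with random replenishment and order levels $(Q_1,Q_2)$: state space $\{0,\dots,Q_1\}\times\{0,\dots,Q_2\}$; demand transitions: from $(i_1,i_2)$ with $i_1,i_2\ge1$, to $(i_1-1,i_2)$ at rate $\lambda_1$ and to $(i_1,i_2-1)$ at rate $\lambda_2$; from $(i_1,0)$ with $i_1\ge1$, to $(i_1-1,0)$ at rate $s_1=\lambda_1+\lambda_2p_{21}$; from $(0,i_2)$ with $i_2\ge1$, to $(0,i_2-1)$ at rate $s_2=\lambda_2+\lambda_1p_{12}$; no demand transitions out of $(0,0)$; from every state a replenishment transition to $(Q_1,Q_2)$ at rate $\mu$. $r_i,c_i,h_i$ are the retail price, unit purchase cost, and end-of-period holding cost of product $i$. *)

theory Defs
  imports Complex_Main
begin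

definition inv_states :: "nat \<Rightarrow> nat \<Rightarrow> (nat \<times> nat) set" where
  "inv_states Q1 Q2 = {0..Q1} \<times> {0..Q2}"

definition demand_rate ::
  "real \<Rightarrow> real \<Rightarrow> real \<Rightarrow> real \<Rightarrow> nat \<times> nat \<Rightarrow> nat \<times> nat \<Rightarrow> real" where
  "demand_rate l1 l2 p12 p21 x y =
     (let (i1, i2) = x in
      if i1 \<ge> 1 \<and> i2 \<ge> 1 then
        (if y = (i1 - 1, i2) then l1 else if y = (i1, i2 - 1) then l2 else 0)
      else if i1 \<ge> 1 \<and> i2 = 0 then
        (if y = (i1 - 1, 0) then l1 + l2 * p21 else 0)
      else if i1 = 0 \<and> i2 \<ge> 1 then
        (if y = (0, i2 - 1) then l2 + l1 * p12 else 0)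
      else 0)"

definition inv_rate ::
  "real \<Rightarrow> real \<Rightarrow> real \<Rightarrow> real \<Rightarrow> real \<Rightarrow> nat \<Rightarrow> nat \<Rightarrow> nat \<times> nat \<Rightarrow> nat \<times> nat \<Rightarrow> real" where
  "inv_rate l1 l2 mu p12 p21 Q1 Q2 x y =
     (if x = y then 0
      else demand_rate l1 l2 p12 p21 x y + (if y = (Q1, Q2) then mu else 0))"

definition is_stationary ::
  "real \<Rightarrow> real \<Rightarrow> real \<Rightarrow> real \<Rightarrow> real \<Rightarrow> nat \<Rightarrow> nat \<Rightarrow> (nat \<times> nat \<Rightarrow> real) \<Rightarrow> bool" where
  "is_stationary l1 l2 mu p12 p21 Q1 Q2 p \<longleftrightarrow>
     (\<forall>x. x \<notin> inv_states Q1 Q2 \<longrightarrow> p x = 0) \<and>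
     (\<forall>x \<in> inv_states Q1 Q2. p x \<ge> 0) \<and>
     (\<Sum>x \<in> inv_states Q1 Q2. p x) = 1 \<and>
     (\<forall>y \<in> inv_states Q1 Q2.
        (\<Sum>x \<in> inv_states Q1 Q2. p x * inv_rate l1 l2 mu p12 p21 Q1 Q2 x y) =
        p y * (\<Sum>z \<in> inv_states Q1 Q2. inv_rate l1 l2 mu p12 p21 Q1 Q2 y z))"

definition stat_dist ::
  "real \<Rightarrow> real \<Rightarrow> real \<Rightarrow> real \<Rightarrow> real \<Rightarrow> nat \<Rightarrow> nat \<Rightarrow> nat \<times> nat \<Rightarrow> real" where
  "stat_dist l1 l2 mu p12 p21 Q1 Q2 = (THE p. is_stationary l1 l2 mu p12 p21 Q1 Q2 p)"

definition E_m1 :: "real \<Rightarrow> real \<Rightarrow> real \<Rightarrow> real \<Rightarrow> real \<Rightarrow> nat \<Rightarrow> nat \<Rightarrow> real" where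
  "E_m1 l1 l2 mu p12 p21 Q1 Q2 =
     (\<Sum>x \<in> inv_states Q1 Q2. real (fst x) * stat_dist l1 l2 mu p12 p21 Q1 Q2 x)"

definition E_m2 :: "real \<Rightarrow> real \<Rightarrow> real \<Rightarrow> real \<Rightarrow> real \<Rightarrow> nat \<Rightarrow> nat \<Rightarrow> real" where
  "E_m2 l1 l2 mu p12 p21 Q1 Q2 =
     (\<Sum>x \<in> inv_states Q1 Q2. real (snd x) * stat_dist l1 l2 mu p12 p21 Q1 Q2 x)"

definition profit2 ::
  "real \<Rightarrow> real \<Rightarrow> real \<Rightarrow> real \<Rightarrow> real \<Rightarrow> real \<Rightarrow> real \<Rightarrow> real \<Rightarrow> real \<Rightarrow> real \<Rightarrow> real \<Rightarrow>
   nat \<Rightarrow> nat \<Rightarrow> real" where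
  "profit2 l1 l2 mu p12 p21 r1 r2 c1 c2 h1 h2 Q1 Q2 =
     mu * ((r1 - c1) * real Q1 + (r2 - c2) * real Q2
           - (r1 + h1) * E_m1 l1 l2 mu p12 p21 Q1 Q2
           - (r2 + h2) * E_m2 l1 l2 mu p12 p21 Q1 Q2)"

end

theory Submission
  imports Defs
begin

lemma cross_generic:
  fixes G :: "nat \<Rightarrow> nat \<Rightarrow> real" and \<alpha> \<beta> s mu :: real
  assumes pos: "\<alpha> > 0" "\<beta> > 0" "mu > 0" "s \<ge> \<alpha>"
  and G0: "\<And>b. G 0 b = 0"
  and G1: "\<And>a. G (Suc a) 0 = (mu * real (Suc a) + s * G a 0) / (s + mu)"
  and G2: "\<And>a b. G (Suc a) (Suc b) = (mu * real (Suc a) + \<alpha> * G a (Suc b) + \<beta> * G (Suc a) b) / (\<alpha>+\<beta>+mu)"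
  shows "0 \<le> G (Suc a) (Suc b) - G (Suc a) b - G a (Suc b) + G a b"
proof -
  define c where "c = \<alpha>+\<beta>+mu"
  have cpos: "c > 0" using pos unfolding c_def by simp
  have spos: "s + mu > 0" using pos by simp
  have G10: "G 1 0 = mu / (s+mu)" using G1[of 0] G0 by simp
  have G1S: "G 1 (Suc b) = (mu + \<beta> * G 1 b) / c" for b
    using G2[of 0 b] G0 unfolding c_def by simp
  have xb: "G 1 b \<le> mu/(\<alpha>+mu)" for b
  proof (induction b)
    case 0
    show ?case unfolding G10 using pos by (intro divide_left_mono) auto
  next
    case (Suc b)
    have "\<beta> * G 1 b \<le> \<beta> * (mu/(\<alpha>+mu))" using Suc pos by (intro mult_left_mono) auto
    hence "(mu + \<beta> * G 1 b) * (\<alpha>+mu) \<le> mu * c"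
      using pos unfolding c_def by (simp add: field_simps)
    thus ?case unfolding G1S using cpos pos by (simp add: field_simps)
  qed
  have D0: "0 \<le> G 1 (Suc b) - G 1 b" for b
  proof -
    have "(\<alpha>+mu) * G 1 b \<le> mu" using xb[of b] pos by (simp add: field_simps)
    hence "0 \<le> (mu + \<beta> * G 1 b) - c * G 1 b" unfolding c_def by (simp add: algebra_simps)
    hence "0 \<le> ((mu + \<beta> * G 1 b) - c * G 1 b) / c" using cpos by simp
    also have "\<dots> = G 1 (Suc b) - G 1 b" unfolding G1S using cpos by (simp add: field_simps)
    finally show ?thesis .
  qed
  define d where "d a = G (Suc a) 0 - G a 0" for a
  have d0: "d 0 = mu/(s+mu)" unfolding d_def using G10 G0 by simp
  have dS: "d (Suc a) = (mu + s * d a) / (s+mu)" for a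
  proof -
    have e1: "(s+mu) * G (Suc (Suc a)) 0 = mu * real (Suc (Suc a)) + s * G (Suc a) 0"
      using G1[of "Suc a"] spos by (simp add: field_simps del: of_nat_Suc)
    have e2: "(s+mu) * G (Suc a) 0 = mu * real (Suc a) + s * G a 0"
      using G1[of a] spos by (simp add: field_simps del: of_nat_Suc)
    have "(s+mu) * d (Suc a) = mu + s * d a" unfolding d_def using e1 e2
      by (simp add: algebra_simps)
    thus ?thesis using spos by (simp add: field_simps)
  qed
  have dle: "d a \<le> 1" for a
  proof (induction a)
    case 0 then show ?case using d0 pos by simp
  next
    case (Suc a)
    have "s * d a \<le> s" using Suc pos by (simp add: mult_left_le)
    thus ?case unfolding dS using spos by simp
  qed
  have dmono: "d a \<le> d (Suc a)" for a
  proof -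
    have "mu * d a \<le> mu" using dle[of a] pos by (simp add: mult_left_le)
    hence "(s+mu) * d a \<le> mu + s * d a" by (simp add: algebra_simps)
    thus ?thesis unfolding dS using spos by (simp add: field_simps)
  qed
  define u where "u a = G a (Suc 0) - G a 0" for a
  have u0: "u 0 = 0" unfolding u_def using G0 by simp
  have uS: "c * u (Suc a) = \<alpha> * u a + (s - \<alpha>) * d a" for a
  proof -
    have e1: "c * G (Suc a) (Suc 0) = mu * real (Suc a) + \<alpha> * G a (Suc 0) + \<beta> * G (Suc a) 0"
      using G2[of a 0] cpos unfolding c_def by (simp add: field_simps)
    have e2: "(s+mu) * G (Suc a) 0 = mu * real (Suc a) + s * G a 0"
      using G1[of a] spos by (simp add: field_simps)
    show ?thesis unfolding u_def d_def c_def using e1 e2 unfolding c_def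
      by (simp add: algebra_simps)
  qed
  have umono: "u a \<le> u (Suc a)" for a
  proof (induction a)
    case 0
    have "0 \<le> (s - \<alpha>) * d 0" using d0 pos spos by simp
    hence "0 \<le> c * u 1" using uS[of 0] u0 by simp
    thus ?case using u0 cpos by (simp add: zero_le_mult_iff)
  next
    case (Suc a)
    have "c * (u (Suc (Suc a)) - u (Suc a)) = \<alpha> * (u (Suc a) - u a) + (s-\<alpha>) * (d (Suc a) - d a)"
      using uS[of "Suc a"] uS[of a] by (simp add: algebra_simps)
    also have "\<dots> \<ge> 0" using Suc dmono[of a] pos by simp
    finally show ?case using cpos by (simp add: zero_le_mult_iff)
  qed
  show ?thesis
  proof (induction a arbitrary: b)
    case 0
    show ?case using D0[of b] G0 by simp
  next
    case (Suc a)
    note outer = Suc.IH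
    show ?case
    proof (induction b)
      case 0
      show ?case using umono[of "Suc a"] unfolding u_def by simp
    next
      case (Suc b)
      have "c * (G (Suc (Suc a)) (Suc (Suc b)) - G (Suc (Suc a)) (Suc b) - G (Suc a) (Suc (Suc b)) + G (Suc a) (Suc b))
         = \<alpha> * (G (Suc a) (Suc (Suc b)) - G (Suc a) (Suc b) - G a (Suc (Suc b)) + G a (Suc b))
         + \<beta> * (G (Suc (Suc a)) (Suc b) - G (Suc (Suc a)) b - G (Suc a) (Suc b) + G (Suc a) b)"
      proof -
        have E: "c * G (Suc x) (Suc y) = mu * real (Suc x) + \<alpha> * G x (Suc y) + \<beta> * G (Suc x) y" for x y
          using G2[of x y] cpos unfolding c_def by (simp add: field_simps del: of_nat_Suc)
        show ?thesis using E[of "Suc a" "Suc b"] E[of "Suc a" b] E[of a "Suc b"] E[of a b]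
          by (simp add: algebra_simps del: of_nat_Suc)
      qed
      also have "\<dots> \<ge> 0" using Suc.IH outer[of "Suc b"] pos by simp
      finally show ?case using cpos by (simp add: zero_le_mult_iff)
    qed
  qed
qed

definition "A1 l1 l2 p21 y2 = (if 1 \<le> (y2::nat) then l1 else l1 + l2 * p21)"
definition "B2 l1 l2 p12 y1 = (if 1 \<le> (y1::nat) then l2 else l2 + l1 * p12)"

lemma dr_in: "demand_rate l1 l2 p12 p21 x (y1,y2) =
   (if x = (Suc y1, y2) then A1 l1 l2 p21 y2 else 0) + (if x = (y1, Suc y2) then B2 l1 l2 p12 y1 else 0)"
proof -
  obtain i1 i2 where x: "x = (i1,i2)" by (cases x)
  show ?thesis unfolding x demand_rate_def A1_def B2_def
    by (cases i1; cases i2; cases y1; cases y2) auto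
qed

lemma dr_out: "demand_rate l1 l2 p12 p21 (y1,y2) z =
   (if 1 \<le> y1 \<and> z = (y1 - 1, y2) then A1 l1 l2 p21 y2 else 0) + (if 1 \<le> y2 \<and> z = (y1, y2 - 1) then B2 l1 l2 p12 y1 else 0)"
proof -
  obtain i1 i2 where x: "z = (i1,i2)" by (cases z)
  show ?thesis unfolding x demand_rate_def A1_def B2_def
    by (cases i1; cases i2; cases y1; cases y2) auto
qed

lemma dr_self: "demand_rate l1 l2 p12 p21 x x = 0"
  by (cases x) (auto simp: dr_out)


fun P :: "real \<Rightarrow> real \<Rightarrow> real \<Rightarrow> real \<Rightarrow> real \<Rightarrow> nat \<Rightarrow> nat \<Rightarrow> nat \<times> nat \<Rightarrow> real" where
  "P l1 l2 mu p12 p21 0 0 = (\<lambda>y. if y = (0,0) then 1 else 0)"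
| "P l1 l2 mu p12 p21 (Suc a) 0 = (\<lambda>y. ((if y = (Suc a, 0) then mu else 0)
      + A1 l1 l2 p21 0 * P l1 l2 mu p12 p21 a 0 y) / (A1 l1 l2 p21 0 + mu))"
| "P l1 l2 mu p12 p21 0 (Suc b) = (\<lambda>y. ((if y = (0, Suc b) then mu else 0)
      + B2 l1 l2 p12 0 * P l1 l2 mu p12 p21 0 b y) / (B2 l1 l2 p12 0 + mu))"
| "P l1 l2 mu p12 p21 (Suc a) (Suc b) = (\<lambda>y. ((if y = (Suc a, Suc b) then mu else 0)
      + l1 * P l1 l2 mu p12 p21 a (Suc b) y + l2 * P l1 l2 mu p12 p21 (Suc a) b y) / (l1 + l2 + mu))"

definition "outr l1 l2 p12 p21 y = (if 1 \<le> fst y then A1 l1 l2 p21 (snd y) else 0)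
   + (if 1 \<le> snd y then B2 l1 l2 p12 (fst y) else 0)"
definition "inflow l1 l2 p12 p21 p y = p (Suc (fst y), snd y) * A1 l1 l2 p21 (snd y)
   + p (fst y, Suc (snd y)) * B2 l1 l2 p12 (fst y)"

lemma P_supp: "y \<notin> inv_states a b \<Longrightarrow> P l1 l2 mu p12 p21 a b y = 0"
  by (induction l1 l2 mu p12 p21 a b arbitrary: y rule: P.induct) (auto simp: inv_states_def)

lemma nat2_induct:
  assumes "R 0 0" "\<And>a. R a 0 \<Longrightarrow> R (Suc a) 0" "\<And>b. R 0 b \<Longrightarrow> R 0 (Suc b)"
    "\<And>a b. R a (Suc b) \<Longrightarrow> R (Suc a) b \<Longrightarrow> R (Suc a) (Suc b)"
  shows "R a b"
proof (induction a arbitrary: b)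
  case 0 show ?case by (induction b) (use assms in auto)
next
  case (Suc a)
  note outer = Suc.IH
  show ?case by (induction b) (use assms outer in auto)
qed

context
  fixes l1 l2 mu p12 p21 :: real
  assumes pos: "l1 > 0" "l2 > 0" "mu > 0" "0 \<le> p12" "0 \<le> p21"
begin

lemma A1_pos: "A1 l1 l2 p21 k > 0" using pos by (simp add: A1_def add_pos_nonneg)
lemma B2_pos: "B2 l1 l2 p12 k > 0" using pos by (simp add: B2_def add_pos_nonneg)

lemma P_nonneg: "P l1 l2 mu p12 p21 a b y \<ge> 0"
  using pos A1_pos[of 0] B2_pos[of 0]
  by (induction a b arbitrary: y rule: nat2_induct)
     (auto intro!: divide_nonneg_nonneg add_nonneg_nonneg mult_nonneg_nonneg)


lemma sum_P_grid:
  assumes "a \<le> a'" "b \<le> b'"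
  shows "(\<Sum>y\<in>inv_states a' b'. f y * P l1 l2 mu p12 p21 a b y)
       = (\<Sum>y\<in>inv_states a b. f y * P l1 l2 mu p12 p21 a b y)"
  by (rule sum.mono_neutral_right)
     (use assms in \<open>auto simp: inv_states_def P_supp\<close>)

lemma sum_P: "(\<Sum>y\<in>inv_states a b. P l1 l2 mu p12 p21 a b y) = 1"
proof (induction a b rule: nat2_induct)
  case 1 show ?case by (simp add: inv_states_def)
next
  case (2 a)
  have s: "(\<Sum>y\<in>inv_states (Suc a) 0. P l1 l2 mu p12 p21 a 0 y) = 1"
    using sum_P_grid[of a "Suc a" 0 0 "\<lambda>_. 1"] 2 by simp
  have f: "finite (inv_states (Suc a) 0)" by (simp add: inv_states_def)
  have m: "(Suc a, 0) \<in> inv_states (Suc a) 0" by (simp add: inv_states_def)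
  show ?case using A1_pos[of 0] pos
    by (simp add: sum_divide_distrib[symmetric] sum.distrib sum_distrib_left[symmetric] s f m)
next
  case (3 b)
  have s: "(\<Sum>y\<in>inv_states 0 (Suc b). P l1 l2 mu p12 p21 0 b y) = 1"
    using sum_P_grid[of 0 0 b "Suc b" "\<lambda>_. 1"] 3 by simp
  have f: "finite (inv_states 0 (Suc b))" by (simp add: inv_states_def)
  have m: "(0, Suc b) \<in> inv_states 0 (Suc b)" by (simp add: inv_states_def)
  show ?case using B2_pos[of 0] pos
    by (simp add: sum_divide_distrib[symmetric] sum.distrib sum_distrib_left[symmetric] s f m)
next
  case (4 a b)
  have s1: "(\<Sum>y\<in>inv_states (Suc a) (Suc b). P l1 l2 mu p12 p21 a (Suc b) y) = 1"
    using sum_P_grid[of a "Suc a" "Suc b" "Suc b" "\<lambda>_. 1"] 4 by simp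
  have s2: "(\<Sum>y\<in>inv_states (Suc a) (Suc b). P l1 l2 mu p12 p21 (Suc a) b y) = 1"
    using sum_P_grid[of "Suc a" "Suc a" b "Suc b" "\<lambda>_. 1"] 4 by simp
  have f: "finite (inv_states (Suc a) (Suc b))" by (simp add: inv_states_def)
  have m: "(Suc a, Suc b) \<in> inv_states (Suc a) (Suc b)" by (simp add: inv_states_def)
  show ?case using pos
    by (simp add: sum_divide_distrib[symmetric] sum.distrib sum_distrib_left[symmetric] s1 s2 f m)
qed


declare P.simps[simp del]

lemma P_fwd: "(outr l1 l2 p12 p21 y + mu) * P l1 l2 mu p12 p21 a b y
   = (if y = (a,b) then mu else 0) + inflow l1 l2 p12 p21 (P l1 l2 mu p12 p21 a b) y"
proof (induction a b arbitrary: y rule: nat2_induct)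
  case 1
  obtain y1 y2 where y: "y = (y1,y2)" by (cases y)
  show ?case unfolding y by (auto simp: outr_def inflow_def P.simps)
next
  case (2 a)
  obtain y1 y2 where y: "y = (y1,y2)" by (cases y)
  define A where "A = A1 l1 l2 p21 0"
  define c where "c = A + mu"
  have cpos: "c > 0" unfolding c_def A_def using A1_pos[of 0] pos by simp
  let ?Pz = "P l1 l2 mu p12 p21 a 0"
  let ?P = "P l1 l2 mu p12 p21 (Suc a) 0"
  have Py: "c * ?P z = (if z = (Suc a, 0) then mu else 0) + A * ?Pz z" for z
  proof -
    have Pd: "?P z = ((if z = (Suc a, 0) then mu else 0) + A * ?Pz z) / c" by (simp add: c_def A_def P.simps)
    show ?thesis unfolding Pd using cpos by simp
  qed
  have Iy: "c * inflow l1 l2 p12 p21 ?P y = (if y = (a,0) then mu * A else 0)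
        + A * inflow l1 l2 p12 p21 ?Pz y" (is "_ = ?R")
  proof -
    have "c * inflow l1 l2 p12 p21 ?P y = (c * ?P (Suc y1,y2)) * A1 l1 l2 p21 y2 + (c * ?P (y1,Suc y2)) * B2 l1 l2 p12 y1"
      unfolding y inflow_def by (simp add: algebra_simps)
    also have "\<dots> = ?R" unfolding Py by (auto simp: y inflow_def A_def algebra_simps)
    finally show ?thesis .
  qed
  have IH: "(outr l1 l2 p12 p21 y + mu) * ?Pz y = (if y = (a,0) then mu else 0) + inflow l1 l2 p12 p21 ?Pz y"
    using 2 by blast
  have oQ: "outr l1 l2 p12 p21 (Suc a, 0) = A" unfolding outr_def A_def by simp
  have "c * ((outr l1 l2 p12 p21 y + mu) * ?P y) = c * ((if y = (Suc a,0) then mu else 0) + inflow l1 l2 p12 p21 ?P y)"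
  proof -
    have "c * ((outr l1 l2 p12 p21 y + mu) * ?P y) = (outr l1 l2 p12 p21 y + mu) * (c * ?P y)" by simp
    also have "\<dots> = (outr l1 l2 p12 p21 y + mu) * (if y = (Suc a, 0) then mu else 0)
       + A * ((outr l1 l2 p12 p21 y + mu) * ?Pz y)" unfolding Py by (simp add: algebra_simps)
    also have "\<dots> = c * ((if y = (Suc a,0) then mu else 0)) + c * inflow l1 l2 p12 p21 ?P y"
      unfolding IH Iy using oQ unfolding c_def by (auto simp: algebra_simps)
    finally show ?thesis by (simp add: algebra_simps)
  qed
  thus ?case using cpos by simp
next
  case (3 b)
  obtain y1 y2 where y: "y = (y1,y2)" by (cases y)
  define A where "A = B2 l1 l2 p12 0"
  define c where "c = A + mu"
  have cpos: "c > 0" unfolding c_def A_def using B2_pos[of 0] pos by simp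
  let ?Pz = "P l1 l2 mu p12 p21 0 b"
  let ?P = "P l1 l2 mu p12 p21 0 (Suc b)"
  have Py: "c * ?P z = (if z = (0, Suc b) then mu else 0) + A * ?Pz z" for z
  proof -
    have Pd: "?P z = ((if z = (0, Suc b) then mu else 0) + A * ?Pz z) / c" by (simp add: c_def A_def P.simps)
    show ?thesis unfolding Pd using cpos by simp
  qed
  have Iy: "c * inflow l1 l2 p12 p21 ?P y = (if y = (0,b) then mu * A else 0)
        + A * inflow l1 l2 p12 p21 ?Pz y" (is "_ = ?R")
  proof -
    have "c * inflow l1 l2 p12 p21 ?P y = (c * ?P (Suc y1,y2)) * A1 l1 l2 p21 y2 + (c * ?P (y1,Suc y2)) * B2 l1 l2 p12 y1"
      unfolding y inflow_def by (simp add: algebra_simps)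
    also have "\<dots> = ?R" unfolding Py by (auto simp: y inflow_def A_def algebra_simps)
    finally show ?thesis .
  qed
  have IH: "(outr l1 l2 p12 p21 y + mu) * ?Pz y = (if y = (0,b) then mu else 0) + inflow l1 l2 p12 p21 ?Pz y"
    using 3 by blast
  have oQ: "outr l1 l2 p12 p21 (0, Suc b) = A" unfolding outr_def A_def by simp
  have "c * ((outr l1 l2 p12 p21 y + mu) * ?P y) = c * ((if y = (0, Suc b) then mu else 0) + inflow l1 l2 p12 p21 ?P y)"
  proof -
    have "c * ((outr l1 l2 p12 p21 y + mu) * ?P y) = (outr l1 l2 p12 p21 y + mu) * (c * ?P y)" by simp
    also have "\<dots> = (outr l1 l2 p12 p21 y + mu) * (if y = (0, Suc b) then mu else 0)
       + A * ((outr l1 l2 p12 p21 y + mu) * ?Pz y)" unfolding Py by (simp add: algebra_simps)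
    also have "\<dots> = c * ((if y = (0, Suc b) then mu else 0)) + c * inflow l1 l2 p12 p21 ?P y"
      unfolding IH Iy using oQ unfolding c_def by (auto simp: algebra_simps)
    finally show ?thesis by (simp add: algebra_simps)
  qed
  thus ?case using cpos by simp
next
  case (4 a b)
  obtain y1 y2 where y: "y = (y1,y2)" by (cases y)
  define c where "c = l1 + l2 + mu"
  have cpos: "c > 0" unfolding c_def using pos by simp
  let ?Pa = "P l1 l2 mu p12 p21 a (Suc b)"
  let ?Pb = "P l1 l2 mu p12 p21 (Suc a) b"
  let ?P = "P l1 l2 mu p12 p21 (Suc a) (Suc b)"
  have Py: "c * ?P z = (if z = (Suc a, Suc b) then mu else 0) + l1 * ?Pa z + l2 * ?Pb z" for z
  proof -
    have Pd: "?P z = ((if z = (Suc a, Suc b) then mu else 0) + l1 * ?Pa z + l2 * ?Pb z) / c" by (simp add: c_def P.simps)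
    show ?thesis unfolding Pd using cpos by simp
  qed
  have Iy: "c * inflow l1 l2 p12 p21 ?P y = (if y = (a, Suc b) then mu * l1 else 0)
        + (if y = (Suc a, b) then mu * l2 else 0)
        + l1 * inflow l1 l2 p12 p21 ?Pa y + l2 * inflow l1 l2 p12 p21 ?Pb y" (is "_ = ?R")
  proof -
    have "c * inflow l1 l2 p12 p21 ?P y = (c * ?P (Suc y1,y2)) * A1 l1 l2 p21 y2 + (c * ?P (y1,Suc y2)) * B2 l1 l2 p12 y1"
      unfolding y inflow_def by (simp add: algebra_simps)
    also have "\<dots> = ?R" unfolding Py by (auto simp: y inflow_def A1_def B2_def algebra_simps)
    finally show ?thesis .
  qed
  have IH1: "(outr l1 l2 p12 p21 y + mu) * ?Pa y = (if y = (a, Suc b) then mu else 0) + inflow l1 l2 p12 p21 ?Pa y"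
    using 4 by blast
  have IH2: "(outr l1 l2 p12 p21 y + mu) * ?Pb y = (if y = (Suc a, b) then mu else 0) + inflow l1 l2 p12 p21 ?Pb y"
    using 4 by blast
  have oQ: "outr l1 l2 p12 p21 (Suc a, Suc b) = l1 + l2" unfolding outr_def A1_def B2_def by simp
  have "c * ((outr l1 l2 p12 p21 y + mu) * ?P y) = c * ((if y = (Suc a, Suc b) then mu else 0) + inflow l1 l2 p12 p21 ?P y)"
  proof -
    have "c * ((outr l1 l2 p12 p21 y + mu) * ?P y) = (outr l1 l2 p12 p21 y + mu) * (c * ?P y)" by simp
    also have "\<dots> = (outr l1 l2 p12 p21 y + mu) * (if y = (Suc a, Suc b) then mu else 0)
       + l1 * ((outr l1 l2 p12 p21 y + mu) * ?Pa y) + l2 * ((outr l1 l2 p12 p21 y + mu) * ?Pb y)"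
      unfolding Py by (simp add: algebra_simps)
    also have "\<dots> = c * ((if y = (Suc a, Suc b) then mu else 0)) + c * inflow l1 l2 p12 p21 ?P y"
      unfolding IH1 IH2 Iy using oQ unfolding c_def by (auto simp: algebra_simps)
    finally show ?thesis by (simp add: algebra_simps)
  qed
  thus ?case using cpos by simp
qed


lemma inv_rate_eq: "inv_rate l1 l2 mu p12 p21 a b x y =
   demand_rate l1 l2 p12 p21 x y + (if y = (a,b) \<and> x \<noteq> (a,b) then mu else 0)"
  unfolding inv_rate_def by (auto simp: dr_self)

lemma rate_in:
  assumes supp: "\<And>x. x \<notin> inv_states a b \<Longrightarrow> p x = 0" and yG: "y \<in> inv_states a b"
  shows "(\<Sum>x\<in>inv_states a b. p x * inv_rate l1 l2 mu p12 p21 a b x y)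
     = inflow l1 l2 p12 p21 p y + (if y = (a,b) then mu * (\<Sum>x\<in>inv_states a b. p x) - mu * p (a,b) else 0)"
proof -
  obtain y1 y2 where y: "y = (y1,y2)" by (cases y)
  let ?G = "inv_states a b"
  have fin: "finite ?G" by (simp add: inv_states_def)
  have QG: "(a,b) \<in> ?G" by (simp add: inv_states_def)
  have eq: "p x * inv_rate l1 l2 mu p12 p21 a b x y =
      (if x = (Suc y1, y2) then p (Suc y1, y2) * A1 l1 l2 p21 y2 else 0)
    + (if x = (y1, Suc y2) then p (y1, Suc y2) * B2 l1 l2 p12 y1 else 0)
    + (if y = (a,b) then mu * p x - (if x = (a,b) then mu * p (a,b) else 0) else 0)" for x
    unfolding inv_rate_eq y dr_in by (auto simp: algebra_simps)
  have s1: "(\<Sum>x\<in>?G. (if x = (Suc y1, y2) then p (Suc y1, y2) * A1 l1 l2 p21 y2 else 0))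
      = p (Suc y1, y2) * A1 l1 l2 p21 y2"
    using supp[of "(Suc y1, y2)"] by (simp add: sum.delta' fin)
  have s2: "(\<Sum>x\<in>?G. (if x = (y1, Suc y2) then p (y1, Suc y2) * B2 l1 l2 p12 y1 else 0))
      = p (y1, Suc y2) * B2 l1 l2 p12 y1"
    using supp[of "(y1, Suc y2)"] by (simp add: sum.delta' fin)
  have s3: "(\<Sum>x\<in>?G. (if y = (a,b) then mu * p x - (if x = (a,b) then mu * p (a,b) else 0) else 0))
      = (if y = (a,b) then mu * (\<Sum>x\<in>?G. p x) - mu * p (a,b) else 0)"
    by (simp add: sum_subtractf sum_distrib_left sum.delta' fin QG)
  show ?thesis unfolding eq sum.distrib s1 s2 s3 by (simp add: y inflow_def)
qed

lemma rate_out: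
  assumes yG: "y \<in> inv_states a b"
  shows "(\<Sum>z\<in>inv_states a b. inv_rate l1 l2 mu p12 p21 a b y z)
     = outr l1 l2 p12 p21 y + (if y \<noteq> (a,b) then mu else 0)"
proof -
  obtain y1 y2 where y: "y = (y1,y2)" by (cases y)
  let ?G = "inv_states a b"
  have fin: "finite ?G" by (simp add: inv_states_def)
  have QG: "(a,b) \<in> ?G" by (simp add: inv_states_def)
  have m1: "(y1 - 1, y2) \<in> ?G" and m2: "(y1, y2 - 1) \<in> ?G" using yG by (auto simp: y inv_states_def)
  have eq: "inv_rate l1 l2 mu p12 p21 a b y z =
      (if z = (y1 - 1, y2) then (if 1 \<le> y1 then A1 l1 l2 p21 y2 else 0) else 0)
    + (if z = (y1, y2 - 1) then (if 1 \<le> y2 then B2 l1 l2 p12 y1 else 0) else 0)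
    + (if z = (a,b) then (if y \<noteq> (a,b) then mu else 0) else 0)" for z
    unfolding inv_rate_eq y dr_out by auto
  show ?thesis unfolding eq sum.distrib using m1 m2
    by (simp add: sum.delta' fin QG y outr_def)
qed

lemma P_stat: "is_stationary l1 l2 mu p12 p21 a b (P l1 l2 mu p12 p21 a b)"
  unfolding is_stationary_def
proof (intro conjI ballI allI impI)
  show "P l1 l2 mu p12 p21 a b x = 0" if "x \<notin> inv_states a b" for x using that P_supp by blast
  show "0 \<le> P l1 l2 mu p12 p21 a b x" for x using P_nonneg .
  show "sum (P l1 l2 mu p12 p21 a b) (inv_states a b) = 1" using sum_P .
  fix y assume yG: "y \<in> inv_states a b"
  let ?p = "P l1 l2 mu p12 p21 a b"
  have F: "(outr l1 l2 p12 p21 y + mu) * ?p y = (if y = (a,b) then mu else 0) + inflow l1 l2 p12 p21 ?p y"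
    by (rule P_fwd)
  show "(\<Sum>x\<in>inv_states a b. ?p x * inv_rate l1 l2 mu p12 p21 a b x y) =
        ?p y * (\<Sum>z\<in>inv_states a b. inv_rate l1 l2 mu p12 p21 a b y z)"
  proof -
    have R: "(\<Sum>x\<in>inv_states a b. ?p x * inv_rate l1 l2 mu p12 p21 a b x y)
     = inflow l1 l2 p12 p21 ?p y + (if y = (a,b) then mu * (\<Sum>x\<in>inv_states a b. ?p x) - mu * ?p (a,b) else 0)"
      by (rule rate_in) (auto intro: P_supp yG)
    show ?thesis unfolding R rate_out[OF yG] sum_P using F
      by (auto simp: algebra_simps)
  qed
qed


lemma outr_nonneg: "outr l1 l2 p12 p21 y \<ge> 0"
  unfolding outr_def using A1_pos B2_pos by (auto intro: add_nonneg_nonneg less_imp_le)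

lemma stat_fwd:
  assumes st: "is_stationary l1 l2 mu p12 p21 a b p" and yG: "y \<in> inv_states a b"
  shows "(outr l1 l2 p12 p21 y + mu) * p y = (if y = (a,b) then mu else 0) + inflow l1 l2 p12 p21 p y"
proof -
  have supp: "\<And>x. x \<notin> inv_states a b \<Longrightarrow> p x = 0" and s1: "(\<Sum>x\<in>inv_states a b. p x) = 1"
    and bal: "(\<Sum>x \<in> inv_states a b. p x * inv_rate l1 l2 mu p12 p21 a b x y) =
        p y * (\<Sum>z \<in> inv_states a b. inv_rate l1 l2 mu p12 p21 a b y z)"
    using st yG unfolding is_stationary_def by auto
  have R: "(\<Sum>x\<in>inv_states a b. p x * inv_rate l1 l2 mu p12 p21 a b x y)
     = inflow l1 l2 p12 p21 p y + (if y = (a,b) then mu * (\<Sum>x\<in>inv_states a b. p x) - mu * p (a,b) else 0)"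
    by (rule rate_in) (auto intro: supp yG)
  show ?thesis using bal unfolding R rate_out[OF yG] s1
    by (auto simp: algebra_simps)
qed

lemma stat_unique:
  assumes st: "is_stationary l1 l2 mu p12 p21 a b p"
  shows "p = P l1 l2 mu p12 p21 a b"
proof -
  let ?G = "inv_states a b"
  define e where "e x = p x - P l1 l2 mu p12 p21 a b x" for x
  have esupp: "e x = 0" if "x \<notin> ?G" for x
  proof -
    have "p x = 0" using st that unfolding is_stationary_def by blast
    moreover have "P l1 l2 mu p12 p21 a b x = 0" using that by (rule P_supp)
    ultimately show ?thesis unfolding e_def by simp
  qed
  have efwd: "(outr l1 l2 p12 p21 y + mu) * e y = inflow l1 l2 p12 p21 e y" if "y \<in> ?G" for y
    using stat_fwd[OF st that] P_fwd[of y a b] unfolding e_def inflow_def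
    by (simp add: algebra_simps)
  have main: "\<forall>y. y \<in> ?G \<longrightarrow> (a - fst y) + (b - snd y) = n \<longrightarrow> e y = 0" for n
  proof (induction n rule: less_induct)
    case (less n)
    show ?case
    proof (intro allI impI)
      fix y assume yG: "y \<in> ?G" and yn: "(a - fst y) + (b - snd y) = n"
      obtain y1 y2 where y: "y = (y1,y2)" by (cases y)
      have z1: "e (Suc y1, y2) = 0"
      proof (cases "(Suc y1, y2) \<in> ?G")
        case True
        hence "(a - Suc y1) + (b - y2) < n" using yn y by (auto simp: inv_states_def)
        thus ?thesis using less True by auto
      qed (rule esupp)
      have z2: "e (y1, Suc y2) = 0"
      proof (cases "(y1, Suc y2) \<in> ?G")
        case True
        hence "(a - y1) + (b - Suc y2) < n" using yn y by (auto simp: inv_states_def)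
        thus ?thesis using less True by auto
      qed (rule esupp)
      have "(outr l1 l2 p12 p21 y + mu) * e y = 0" using efwd[OF yG] z1 z2 by (simp add: inflow_def y)
      moreover have "outr l1 l2 p12 p21 y + mu > 0" using outr_nonneg[of y] pos by simp
      ultimately show "e y = 0" by simp
    qed
  qed
  have "e y = 0" for y
    using main[of "(a - fst y) + (b - snd y)"] esupp[of y] by blast
  thus ?thesis unfolding e_def by auto
qed

lemma stat_dist_eq: "stat_dist l1 l2 mu p12 p21 a b = P l1 l2 mu p12 p21 a b"
  unfolding stat_dist_def using P_stat stat_unique by (rule the_equality)


lemma S_rec2: "(\<Sum>y\<in>inv_states (Suc a) (Suc b). f y * P l1 l2 mu p12 p21 (Suc a) (Suc b) y)
  = (mu * f (Suc a, Suc b) + l1 * (\<Sum>y\<in>inv_states a (Suc b). f y * P l1 l2 mu p12 p21 a (Suc b) y)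
     + l2 * (\<Sum>y\<in>inv_states (Suc a) b. f y * P l1 l2 mu p12 p21 (Suc a) b y)) / (l1 + l2 + mu)"
proof -
  have s1: "(\<Sum>y\<in>inv_states (Suc a) (Suc b). f y * P l1 l2 mu p12 p21 a (Suc b) y)
      = (\<Sum>y\<in>inv_states a (Suc b). f y * P l1 l2 mu p12 p21 a (Suc b) y)"
    by (rule sum_P_grid) auto
  have s2: "(\<Sum>y\<in>inv_states (Suc a) (Suc b). f y * P l1 l2 mu p12 p21 (Suc a) b y)
      = (\<Sum>y\<in>inv_states (Suc a) b. f y * P l1 l2 mu p12 p21 (Suc a) b y)"
    by (rule sum_P_grid) auto
  have fin: "finite (inv_states (Suc a) (Suc b))" by (simp add: inv_states_def)
  have m: "(Suc a, Suc b) \<in> inv_states (Suc a) (Suc b)" by (simp add: inv_states_def)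
  have "(\<Sum>y\<in>inv_states (Suc a) (Suc b). f y * P l1 l2 mu p12 p21 (Suc a) (Suc b) y)
     = (\<Sum>y\<in>inv_states (Suc a) (Suc b). ((if y = (Suc a, Suc b) then mu * f y else 0)
        + l1 * (f y * P l1 l2 mu p12 p21 a (Suc b) y) + l2 * (f y * P l1 l2 mu p12 p21 (Suc a) b y)) / (l1+l2+mu))"
    by (rule sum.cong) (auto simp: P.simps algebra_simps add_divide_distrib)
  also have "\<dots> = (mu * f (Suc a, Suc b) + l1 * (\<Sum>y\<in>inv_states (Suc a) (Suc b). f y * P l1 l2 mu p12 p21 a (Suc b) y)
     + l2 * (\<Sum>y\<in>inv_states (Suc a) (Suc b). f y * P l1 l2 mu p12 p21 (Suc a) b y)) / (l1 + l2 + mu)"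
    by (simp add: sum_divide_distrib[symmetric] sum.distrib sum_distrib_left fin m sum.delta')
  finally show ?thesis unfolding s1 s2 .
qed

lemma S_rec1: "(\<Sum>y\<in>inv_states (Suc a) 0. f y * P l1 l2 mu p12 p21 (Suc a) 0 y)
  = (mu * f (Suc a, 0) + A1 l1 l2 p21 0 * (\<Sum>y\<in>inv_states a 0. f y * P l1 l2 mu p12 p21 a 0 y))
     / (A1 l1 l2 p21 0 + mu)"
proof -
  have s1: "(\<Sum>y\<in>inv_states (Suc a) 0. f y * P l1 l2 mu p12 p21 a 0 y)
      = (\<Sum>y\<in>inv_states a 0. f y * P l1 l2 mu p12 p21 a 0 y)"
    by (rule sum_P_grid) auto
  have fin: "finite (inv_states (Suc a) 0)" by (simp add: inv_states_def)
  have m: "(Suc a, 0) \<in> inv_states (Suc a) 0" by (simp add: inv_states_def)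
  have "(\<Sum>y\<in>inv_states (Suc a) 0. f y * P l1 l2 mu p12 p21 (Suc a) 0 y)
     = (\<Sum>y\<in>inv_states (Suc a) 0. ((if y = (Suc a, 0) then mu * f y else 0)
        + A1 l1 l2 p21 0 * (f y * P l1 l2 mu p12 p21 a 0 y)) / (A1 l1 l2 p21 0 + mu))"
    by (rule sum.cong) (auto simp: P.simps algebra_simps add_divide_distrib)
  also have "\<dots> = (mu * f (Suc a, 0) + A1 l1 l2 p21 0 * (\<Sum>y\<in>inv_states (Suc a) 0. f y * P l1 l2 mu p12 p21 a 0 y))
     / (A1 l1 l2 p21 0 + mu)"
    by (simp add: sum_divide_distrib[symmetric] sum.distrib sum_distrib_left fin m sum.delta')
  finally show ?thesis unfolding s1 .
qed

lemma S_rec0: "(\<Sum>y\<in>inv_states 0 (Suc b). f y * P l1 l2 mu p12 p21 0 (Suc b) y)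
  = (mu * f (0, Suc b) + B2 l1 l2 p12 0 * (\<Sum>y\<in>inv_states 0 b. f y * P l1 l2 mu p12 p21 0 b y))
     / (B2 l1 l2 p12 0 + mu)"
proof -
  have s1: "(\<Sum>y\<in>inv_states 0 (Suc b). f y * P l1 l2 mu p12 p21 0 b y)
      = (\<Sum>y\<in>inv_states 0 b. f y * P l1 l2 mu p12 p21 0 b y)"
    by (rule sum_P_grid) auto
  have fin: "finite (inv_states 0 (Suc b))" by (simp add: inv_states_def)
  have m: "(0, Suc b) \<in> inv_states 0 (Suc b)" by (simp add: inv_states_def)
  have "(\<Sum>y\<in>inv_states 0 (Suc b). f y * P l1 l2 mu p12 p21 0 (Suc b) y)
     = (\<Sum>y\<in>inv_states 0 (Suc b). ((if y = (0, Suc b) then mu * f y else 0)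
        + B2 l1 l2 p12 0 * (f y * P l1 l2 mu p12 p21 0 b y)) / (B2 l1 l2 p12 0 + mu))"
    by (rule sum.cong) (auto simp: P.simps algebra_simps add_divide_distrib)
  also have "\<dots> = (mu * f (0, Suc b) + B2 l1 l2 p12 0 * (\<Sum>y\<in>inv_states 0 (Suc b). f y * P l1 l2 mu p12 p21 0 b y))
     / (B2 l1 l2 p12 0 + mu)"
    by (simp add: sum_divide_distrib[symmetric] sum.distrib sum_distrib_left fin m sum.delta')
  finally show ?thesis unfolding s1 .
qed

lemma E1_eq: "E_m1 l1 l2 mu p12 p21 a b = (\<Sum>y\<in>inv_states a b. real (fst y) * P l1 l2 mu p12 p21 a b y)"
  unfolding E_m1_def stat_dist_eq ..
lemma E2_eq: "E_m2 l1 l2 mu p12 p21 a b = (\<Sum>y\<in>inv_states a b. real (snd y) * P l1 l2 mu p12 p21 a b y)"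
  unfolding E_m2_def stat_dist_eq ..

lemma E1_0: "E_m1 l1 l2 mu p12 p21 0 b = 0"
  unfolding E1_eq by (rule sum.neutral) (auto simp: inv_states_def)
lemma E2_0: "E_m2 l1 l2 mu p12 p21 a 0 = 0"
  unfolding E2_eq by (rule sum.neutral) (auto simp: inv_states_def)

lemma E1_1: "E_m1 l1 l2 mu p12 p21 (Suc a) 0 = (mu * real (Suc a) + (l1 + l2 * p21) * E_m1 l1 l2 mu p12 p21 a 0) / ((l1 + l2 * p21) + mu)"
  unfolding E1_eq S_rec1 by (simp add: A1_def)
lemma E2_1: "E_m2 l1 l2 mu p12 p21 0 (Suc b) = (mu * real (Suc b) + (l2 + l1 * p12) * E_m2 l1 l2 mu p12 p21 0 b) / ((l2 + l1 * p12) + mu)"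
  unfolding E2_eq S_rec0 by (simp add: B2_def)
lemma E1_2: "E_m1 l1 l2 mu p12 p21 (Suc a) (Suc b) = (mu * real (Suc a) + l1 * E_m1 l1 l2 mu p12 p21 a (Suc b) + l2 * E_m1 l1 l2 mu p12 p21 (Suc a) b) / (l1 + l2 + mu)"
  unfolding E1_eq S_rec2 by simp
lemma E2_2: "E_m2 l1 l2 mu p12 p21 (Suc a) (Suc b) = (mu * real (Suc b) + l1 * E_m2 l1 l2 mu p12 p21 a (Suc b) + l2 * E_m2 l1 l2 mu p12 p21 (Suc a) b) / (l1 + l2 + mu)"
  unfolding E2_eq S_rec2 by simp

end

theorem theorem4:
  fixes l1 l2 mu p12 p21 r1 r2 c1 c2 h1 h2 :: real and Q1 Q2 :: nat
  assumes "l1 > 0" "l2 > 0" "mu > 0"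
    and "0 \<le> p12" "p12 \<le> 1" "0 \<le> p21" "p21 \<le> 1"
    and "r1 \<ge> 0" "r2 \<ge> 0" "h1 \<ge> 0" "h2 \<ge> 0"
  shows "profit2 l1 l2 mu p12 p21 r1 r2 c1 c2 h1 h2 (Q1 + 1) (Q2 + 1)
       - profit2 l1 l2 mu p12 p21 r1 r2 c1 c2 h1 h2 (Q1 + 1) Q2
       - profit2 l1 l2 mu p12 p21 r1 r2 c1 c2 h1 h2 Q1 (Q2 + 1)
       + profit2 l1 l2 mu p12 p21 r1 r2 c1 c2 h1 h2 Q1 Q2 \<le> 0"
proof -
  note pos = assms(1,2,3,4,6)
  let ?E1 = "E_m1 l1 l2 mu p12 p21"
  let ?E2 = "E_m2 l1 l2 mu p12 p21"
  have D1: "0 \<le> ?E1 (Suc Q1) (Suc Q2) - ?E1 (Suc Q1) Q2 - ?E1 Q1 (Suc Q2) + ?E1 Q1 Q2"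
  proof (rule cross_generic[where \<alpha>=l1 and \<beta>=l2 and mu=mu and s="l1 + l2 * p21"])
    show "l1 \<le> l1 + l2 * p21" using pos by simp
  qed (use pos E1_0 E1_1 E1_2 in auto)
  let ?G = "\<lambda>a b. ?E2 b a"
  have D2': "0 \<le> ?G (Suc Q2) (Suc Q1) - ?G (Suc Q2) Q1 - ?G Q2 (Suc Q1) + ?G Q2 Q1"
  proof (rule cross_generic[where \<alpha>=l2 and \<beta>=l1 and mu=mu and s="l2 + l1 * p12"])
    show "l2 \<le> l2 + l1 * p12" using pos by simp
    show "?G (Suc a) (Suc b) = (mu * real (Suc a) + l2 * ?G a (Suc b) + l1 * ?G (Suc a) b) / (l2 + l1 + mu)" for a b
      using E2_2[OF pos, of b a] by (simp add: algebra_simps)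
  qed (use pos E2_0 E2_1 in auto)
  have D2: "0 \<le> ?E2 (Suc Q1) (Suc Q2) - ?E2 (Suc Q1) Q2 - ?E2 Q1 (Suc Q2) + ?E2 Q1 Q2"
    using D2' by simp
  have w1: "0 \<le> (r1 + h1) * (?E1 (Suc Q1) (Suc Q2) - ?E1 (Suc Q1) Q2 - ?E1 Q1 (Suc Q2) + ?E1 Q1 Q2)"
    using D1 assms by simp
  have w2: "0 \<le> (r2 + h2) * (?E2 (Suc Q1) (Suc Q2) - ?E2 (Suc Q1) Q2 - ?E2 Q1 (Suc Q2) + ?E2 Q1 Q2)"
    using D2 assms by simp
  have "profit2 l1 l2 mu p12 p21 r1 r2 c1 c2 h1 h2 (Q1 + 1) (Q2 + 1)
       - profit2 l1 l2 mu p12 p21 r1 r2 c1 c2 h1 h2 (Q1 + 1) Q2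
       - profit2 l1 l2 mu p12 p21 r1 r2 c1 c2 h1 h2 Q1 (Q2 + 1)
       + profit2 l1 l2 mu p12 p21 r1 r2 c1 c2 h1 h2 Q1 Q2
     = - mu * ((r1 + h1) * (?E1 (Suc Q1) (Suc Q2) - ?E1 (Suc Q1) Q2 - ?E1 Q1 (Suc Q2) + ?E1 Q1 Q2)
          + (r2 + h2) * (?E2 (Suc Q1) (Suc Q2) - ?E2 (Suc Q1) Q2 - ?E2 Q1 (Suc Q2) + ?E2 Q1 Q2))"
    unfolding profit2_def by (simp add: algebra_simps)
  also have "\<dots> \<le> 0" using w1 w2 pos by (simp add: mult_nonneg_nonneg)
  finally show ?thesis .
qed

end
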